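(* Suppose $F:L^1(0,T)\to\mathbb R$ is Fréchet differentiable and its derivative $\nabla F:L^1(0,T)\to L^\infty(0,T)$ is Lipschitz continuous with constant $L\ge0$. Let $u\in U_{ad}\cap\mathrm{BV}(0,T)$, $j\in\{2,\dots,d\}$ and $0<t_1<t_2<t_3<t_4<T$ be such that $u=\nu_j$ a.e. on $(t_2,t_3)$ and $u<\nu_j$ a.e. on $(t_1,t_2)\cup(t_3,t_4)$. If \[-2\beta-\int_{t_2}^{t_3}\nabla F(u)(s)\,ds+\frac L2(\nu_j-\nu_{j-1})(t_3-t_2)^2<0,\] then $v:=u+(\nu_{j-1}-\nu_j)\chi_{(t_2,t_3)}$ satisfies $F(v)+\beta\mathrm{TV}(v)<F(u)+\beta\mathrm{TV}(u)$.
   Context: $T>0$, $\beta>0$; $\nu_1<\dots<\nu_d$ are integers. $\mathrm{TV}(u):=\sup\{\int_0^T u\varphi'\,dt : \varphi\in C_c^1(0,T),\ \|\varphi\|_\infty\le 1\}$, $\mathrm{BV}(0,T)=\{u\in L^1(0,T):\mathrm{TV}(u)<\infty\}$. $U_{ad}:=\{u\in L^1(0,T): u(t)\in\{\nu_1,\dots,\nu_d\}\text{ a.e.}\}$. $\nabla F(u)\in L^\infty(0,T)$ denotes the function with $F'(u)h=\int_0^T\nabla F(u)h\,dt$ for all $h\in L^1(0,T)$. *)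

theory Defs
  imports "HOL-Analysis.Analysis"
begin

text \<open>The measure space ((0,T), Lebesgue); L^1(0,T) and L^infinity(0,T) are
  represented by functions real => real, identified only through this measure.\<close>

abbreviation Om :: "real \<Rightarrow> real measure" where
  "Om T \<equiv> lebesgue_on {0<..<T}"

definition L1 :: "real \<Rightarrow> (real \<Rightarrow> real) set" where
  "L1 T = {u. integrable (Om T) u}"

definition norm1 :: "real \<Rightarrow> (real \<Rightarrow> real) \<Rightarrow> real" where
  "norm1 T u = (\<integral>x. \<bar>u x\<bar> \<partial>Om T)"

definition Linf :: "real \<Rightarrow> (real \<Rightarrow> real) \<Rightarrow> bool" where
  "Linf T g \<longleftrightarrow> g \<in> borel_measurable (Om T) \<and> (\<exists>C. AE x in Om T. \<bar>g x\<bar> \<le> C)"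

definition frechet_grad ::
  "real \<Rightarrow> ((real \<Rightarrow> real) \<Rightarrow> real) \<Rightarrow> ((real \<Rightarrow> real) \<Rightarrow> (real \<Rightarrow> real)) \<Rightarrow> bool" where
  "frechet_grad T F G \<longleftrightarrow>
     (\<forall>u\<in>L1 T. Linf T (G u) \<and>
        (\<forall>\<epsilon>>0. \<exists>\<delta>>0. \<forall>h\<in>L1 T. norm1 T h < \<delta> \<longrightarrow>
           \<bar>F (\<lambda>x. u x + h x) - F u - (\<integral>x. G u x * h x \<partial>Om T)\<bar> \<le> \<epsilon> * norm1 T h))"

definition grad_lipschitz ::
  "real \<Rightarrow> ((real \<Rightarrow> real) \<Rightarrow> (real \<Rightarrow> real)) \<Rightarrow> real \<Rightarrow> bool" where
  "grad_lipschitz T G L \<longleftrightarrow>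
     (\<forall>u\<in>L1 T. \<forall>w\<in>L1 T. AE x in Om T. \<bar>G u x - G w x\<bar> \<le> L * norm1 T (\<lambda>y. u y - w y))"

definition test_fun :: "real \<Rightarrow> (real \<Rightarrow> real) \<Rightarrow> bool" where
  "test_fun T \<phi> \<longleftrightarrow> \<phi> C1_differentiable_on UNIV \<and>
     (\<exists>a b. 0 < a \<and> a \<le> b \<and> b < T \<and> (\<forall>x. x \<notin> {a..b} \<longrightarrow> \<phi> x = 0)) \<and>
     (\<forall>x. \<bar>\<phi> x\<bar> \<le> 1)"

definition TV :: "real \<Rightarrow> (real \<Rightarrow> real) \<Rightarrow> ereal" where
  "TV T u = (SUP \<phi>\<in>{\<phi>. test_fun T \<phi>}. ereal (\<integral>t. u t * deriv \<phi> t \<partial>Om T))"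

definition BV :: "real \<Rightarrow> (real \<Rightarrow> real) set" where
  "BV T = {u \<in> L1 T. TV T u < \<infinity>}"

definition Uad :: "real \<Rightarrow> nat \<Rightarrow> (nat \<Rightarrow> int) \<Rightarrow> (real \<Rightarrow> real) set" where
  "Uad T d \<nu> = {u \<in> L1 T. AE t in Om T. u t \<in> (\<lambda>i. real_of_int (\<nu> i)) ` {1..d}}"

end

theory Submission
  imports Defs
begin
definition cl :: "real \<Rightarrow> real" where "cl x = max 0 (min 1 x)"
definition ss :: "real \<Rightarrow> real" where "ss x = 3*(cl x)^2 - 2*(cl x)^3"
definition ss' :: "real \<Rightarrow> real" where "ss' x = 6 * cl x * (1 - cl x)"

lemma quad_deriv:
  fixes f :: "real \<Rightarrow> real"
  assumes "\<And>y. \<bar>f y - f x - D*(y-x)\<bar> \<le> C*(y-x)^2"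
  shows "(f has_real_derivative D) (at x)"
  unfolding DERIV_def LIM_eq
proof (intro allI impI)
  fix r :: real assume r: "r > 0"
  have C0: "C \<ge> 0" using assms[of "x+1"] by auto
  show "\<exists>s>0. \<forall>h. h \<noteq> 0 \<and> norm (h - 0) < s \<longrightarrow> norm ((f (x + h) - f x) / h - D) < r"
  proof (intro exI[of _ "r/(C+1)"] conjI allI impI)
    show "r/(C+1) > 0" using r C0 by auto
    fix h :: real assume h: "h \<noteq> 0 \<and> norm (h - 0) < r / (C + 1)"
    have "(f (x + h) - f x) / h - D = (f (x+h) - f x - D*((x+h)-x))/h" using h by (simp add: field_simps)
    then have "norm ((f (x + h) - f x) / h - D) = \<bar>f (x+h) - f x - D*((x+h)-x)\<bar> / \<bar>h\<bar>" by (simp add: abs_divide)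
    also have "\<dots> \<le> C*h^2/\<bar>h\<bar>" using assms[of "x+h"] h by (intro divide_right_mono) auto
    also have "\<dots> = C*\<bar>h\<bar>" using h by (simp add: power2_eq_square field_simps)
    also have "\<dots> \<le> C * (r/(C+1))" using h C0 by (intro mult_left_mono) auto
    also have "\<dots> < r" using r C0 by (simp add: field_simps)
    finally show "norm ((f (x + h) - f x) / h - D) < r" .
  qed
qed

lemma cl_bounds: "0 \<le> cl x" "cl x \<le> 1" by (auto simp: cl_def)

lemma ss_deriv: "(ss has_real_derivative ss' x) (at x)"
proof -
  consider "x < 0" | "x = 0" | "0 < x \<and> x < 1" | "x = 1" | "x > 1" by linarith
  then show ?thesis
  proof cases
    case 1
    have "((\<lambda>_. 0::real) has_real_derivative 0) (at x)" by simp
    then have "(ss has_real_derivative 0) (at x)"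
      by (rule has_field_derivative_transform_within_open[where S="{..<0}"])
         (use 1 in \<open>auto simp: ss_def ss'_def cl_def\<close>)
    moreover have "ss' x = 0" using 1 by (simp add: ss'_def cl_def)
    ultimately show ?thesis by simp
  next
    case 5
    have "((\<lambda>_. 1::real) has_real_derivative 0) (at x)" by simp
    then have "(ss has_real_derivative 0) (at x)"
      by (rule has_field_derivative_transform_within_open[where S="{1<..}"])
         (use 5 in \<open>auto simp: ss_def ss'_def cl_def\<close>)
    moreover have "ss' x = 0" using 5 by (simp add: ss'_def cl_def)
    ultimately show ?thesis by simp
  next
    case 3
    have "((\<lambda>y. 3*y^2 - 2*y^3) has_real_derivative (6*x*(1-x))) (at x)"
      by (auto intro!: derivative_eq_intros simp: algebra_simps power2_eq_square)
    then have "(ss has_real_derivative (6*x*(1-x))) (at x)"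
      by (rule has_field_derivative_transform_within_open[where S="{0<..<1}"])
         (use 3 in \<open>auto simp: ss_def ss'_def cl_def\<close>)
    moreover have "ss' x = 6*x*(1-x)" using 3 by (simp add: ss'_def cl_def)
    ultimately show ?thesis by simp
  next
    case 2
    show ?thesis unfolding 2
    proof (rule quad_deriv[where C=3])
      fix y :: real
      have c: "0 \<le> cl y" "cl y \<le> 1" "cl y \<le> \<bar>y\<bar>" by (auto simp: cl_def)
      have "cl y ^2 \<le> y^2" using c by (metis abs_le_square_iff abs_of_nonneg)
      moreover have "0 \<le> 3*(cl y)^2 - 2*(cl y)^3" using c
        by (simp add: power2_eq_square power3_eq_cube) (smt (verit) mult_left_le mult_nonneg_nonneg)
      moreover have "cl y ^3 \<ge> 0" using c by simp
      ultimately show "\<bar>ss y - ss 0 - ss' 0 * (y - 0)\<bar> \<le> 3 * (y - 0)\<^sup>2"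
        by (simp add: ss_def ss'_def cl_def[of 0]) (smt (verit) zero_le_power)
    qed
  next
    case 4
    show ?thesis unfolding 4
    proof (rule quad_deriv[where C=3])
      fix y :: real
      have c: "0 \<le> cl y" "cl y \<le> 1" "1 - cl y \<le> \<bar>y - 1\<bar>" by (auto simp: cl_def)
      have "(1 - cl y) ^2 \<le> (y-1)^2" using c by (metis abs_le_square_iff abs_of_nonneg diff_ge_0_iff_ge)
      moreover have "1 - (3*(cl y)^2 - 2*(cl y)^3) = (1 - cl y)^2 * (1 + 2*cl y)"
        by (simp add: power2_eq_square power3_eq_cube algebra_simps)
      moreover have "(1 - cl y)^2 * (1 + 2*cl y) \<le> (1 - cl y)^2 * 3"
        using c by (intro mult_left_mono) auto
      moreover have "(1 - cl y)^2 * (1 + 2*cl y) \<ge> 0" using c by simp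
      ultimately show "\<bar>ss y - ss 1 - ss' 1 * (y - 1)\<bar> \<le> 3 * (y - 1)\<^sup>2"
        by (simp add: ss_def ss'_def cl_def[of 1])
    qed
  qed
qed

lemma ss'_cont: "continuous_on UNIV ss'"
  unfolding ss'_def cl_def by (intro continuous_intros)

lemma ss_props: "0 \<le> ss x" "ss x \<le> 1" "0 \<le> ss' x" "x \<le> 0 \<Longrightarrow> ss x = 0" "x \<le> 0 \<Longrightarrow> ss' x = 0"
  "1 \<le> x \<Longrightarrow> ss x = 1" "1 \<le> x \<Longrightarrow> ss' x = 0"
proof -
  have c: "0 \<le> cl x" "cl x \<le> 1" by (auto simp: cl_def)
  have e: "1 - (3*(cl x)^2 - 2*(cl x)^3) = (1 - cl x)^2 * (1 + 2*cl x)"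
        by (simp add: power2_eq_square power3_eq_cube algebra_simps)
  have e2: "3*(cl x)^2 - 2*(cl x)^3 = (cl x)^2 * (3 - 2*cl x)"
        by (simp add: power2_eq_square power3_eq_cube algebra_simps)
  show "0 \<le> ss x" unfolding ss_def e2 using c by simp
  show "ss x \<le> 1" using e c by (simp add: ss_def) (smt (verit) mult_nonneg_nonneg zero_le_power2)
  show "0 \<le> ss' x" using c by (simp add: ss'_def)
  show "x \<le> 0 \<Longrightarrow> ss x = 0" "x \<le> 0 \<Longrightarrow> ss' x = 0" "1 \<le> x \<Longrightarrow> ss x = 1" "1 \<le> x \<Longrightarrow> ss' x = 0"
    by (auto simp: ss_def ss'_def cl_def)
qed

lemma bint:
  fixes f :: "real \<Rightarrow> real"
  assumes "f \<in> borel_measurable (lebesgue_on S)" "S \<in> lmeasurable" "AE x in lebesgue_on S. \<bar>f x\<bar> \<le> B"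
  shows "integrable (lebesgue_on S) f"
  using finite_measure.integrable_const_bound[OF finite_measure_lebesgue_on[OF assms(2)], of f B] assms
  by auto

lemma cont_bound:
  fixes f :: "real \<Rightarrow> real"
  assumes "continuous_on UNIV f"
  shows "\<exists>B. \<forall>x\<in>{a..b}. \<bar>f x\<bar> \<le> B"
proof -
  have "compact (f ` {a..b})" by (rule compact_continuous_image) (use assms continuous_on_subset in auto)
  then obtain B where "\<forall>y\<in>f ` {a..b}. norm y \<le> B" using compact_imp_bounded bounded_iff by metis
  then show ?thesis by auto
qed

lemma ftc:
  fixes f f' :: "real \<Rightarrow> real"
  assumes ab: "a < b" and d: "\<And>x. (f has_real_derivative f' x) (at x)" and c: "continuous_on UNIV f'"
  shows "integrable (lebesgue_on {a<..<b}) f'" "integral\<^sup>L (lebesgue_on {a<..<b}) f' = f b - f a"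
proof -
  obtain B where B: "\<forall>x\<in>{a..b}. \<bar>f' x\<bar> \<le> B" using cont_bound[OF c] by blast
  show i: "integrable (lebesgue_on {a<..<b}) f'"
  proof (rule bint[where B=B])
    show "f' \<in> borel_measurable (lebesgue_on {a<..<b})"
      by (rule continuous_imp_measurable_on_sets_lebesgue) (use c continuous_on_subset in auto)
    show "{a<..<b} \<in> lmeasurable" by simp
    show "AE x in lebesgue_on {a<..<b}. \<bar>f' x\<bar> \<le> B"
      using B by (intro AE_I2) (auto simp: space_restrict_space)
  qed
  have "integral\<^sup>L (lebesgue_on {a<..<b}) f' = integral {a<..<b} f'"
    by (rule lebesgue_integral_eq_integral[OF i]) simp
  also have "\<dots> = integral {a..b} f'" by (simp add: integral_open_interval_real)
  also have "\<dots> = f b - f a"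
  proof (rule integral_unique, rule fundamental_theorem_of_calculus)
    show "a \<le> b" using ab by simp
    fix x assume "x \<in> {a..b}"
    show "(f has_vector_derivative f' x) (at x within {a..b})"
      using d[of x] by (simp add: has_real_derivative_iff_has_vector_derivative has_vector_derivative_at_within)
  qed
  finally show "integral\<^sup>L (lebesgue_on {a<..<b}) f' = f b - f a" .
qed

lemma L1_comb: "u \<in> L1 T \<Longrightarrow> h \<in> L1 T \<Longrightarrow> (\<lambda>x. u x + s * h x) \<in> L1 T"
  by (auto simp: L1_def)

lemma Gh_int:
  assumes fg: "frechet_grad T F G" and w: "w \<in> L1 T" and h: "h \<in> L1 T"
  shows "integrable (Om T) (\<lambda>x. G w x * h x)"
proof -
  from fg w have "Linf T (G w)" by (auto simp: frechet_grad_def)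
  then obtain C where m: "G w \<in> borel_measurable (Om T)" and C: "AE x in Om T. \<bar>G w x\<bar> \<le> C"
    by (auto simp: Linf_def)
  have 1: "integrable (Om T) (\<lambda>x. C * h x)" using h by (auto simp: L1_def)
  have 2: "(\<lambda>x. G w x * h x) \<in> borel_measurable (Om T)" using m h by (auto simp: L1_def)
  have 3: "AE x in Om T. norm (G w x * h x) \<le> norm (C * h x)"
    using C by eventually_elim (auto simp: abs_mult intro: mult_right_mono)
  show ?thesis using Bochner_Integration.integrable_bound[OF 1 2 3] .
qed

lemma norm1_scale: "norm1 T (\<lambda>x. r * h x) = \<bar>r\<bar> * norm1 T h"
proof -
  have "norm1 T (\<lambda>x. r * h x) = (\<integral>x. \<bar>r\<bar> * \<bar>h x\<bar> \<partial>Om T)" unfolding norm1_def by (simp only: abs_mult)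
  also have "\<dots> = \<bar>r\<bar> * norm1 T h" unfolding norm1_def by (rule integral_mult_right_zero)
  finally show ?thesis .
qed

lemma F_part:
  fixes F :: "(real \<Rightarrow> real) \<Rightarrow> real"
  assumes fg: "frechet_grad T F G" and gl: "grad_lipschitz T G L" and L0: "L \<ge> 0"
    and u: "u \<in> L1 T" and h: "h \<in> L1 T"
  shows "F (\<lambda>x. u x + h x) \<le> F u + (\<integral>x. G u x * h x \<partial>Om T) + L/2 * (norm1 T h)^2"
proof -
  define N where "N = norm1 T h"
  have N0: "N \<ge> 0" unfolding N_def norm1_def by simp
  define g where "g s = F (\<lambda>x. u x + s * h x)" for s
  define g' where "g' s = (\<integral>x. G (\<lambda>x. u x + s * h x) x * h x \<partial>Om T)" for s
  have us: "(\<lambda>x. u x + s * h x) \<in> L1 T" for s using L1_comb[OF u h] .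
  have fr: "\<forall>\<epsilon>>0. \<exists>\<delta>>0. \<forall>k\<in>L1 T. norm1 T k < \<delta> \<longrightarrow>
           \<bar>F (\<lambda>x. w x + k x) - F w - (\<integral>x. G w x * k x \<partial>Om T)\<bar> \<le> \<epsilon> * norm1 T k" if "w \<in> L1 T" for w
    using fg that unfolding frechet_grad_def by blast
  have der: "(g has_real_derivative g' s) (at s)" for s
    unfolding DERIV_def LIM_eq
  proof (intro allI impI)
    fix r :: real assume r: "r > 0"
    define \<epsilon> where "\<epsilon> = r / (N + 1)"
    have e: "\<epsilon> > 0" using r N0 by (simp add: \<epsilon>_def)
    have eN: "\<epsilon> * N < r" using r N0 by (simp add: \<epsilon>_def field_simps)
    obtain \<delta> where d: "\<delta> > 0" and dd: "\<forall>k\<in>L1 T. norm1 T k < \<delta> \<longrightarrow>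
       \<bar>F (\<lambda>x. u x + s * h x + k x) - F (\<lambda>x. u x + s * h x) - (\<integral>x. G (\<lambda>x. u x + s * h x) x * k x \<partial>Om T)\<bar>
         \<le> \<epsilon> * norm1 T k"
      using fr[OF us[of s], rule_format, OF e] by blast
    show "\<exists>s'>0. \<forall>t. t \<noteq> 0 \<and> norm (t - 0) < s' \<longrightarrow> norm ((g (s + t) - g s) / t - g' s) < r"
    proof (intro exI[of _ "\<delta>/(N+1)"] conjI allI impI)
      show "\<delta>/(N+1) > 0" using d N0 by simp
      fix t :: real assume t: "t \<noteq> 0 \<and> norm (t - 0) < \<delta> / (N + 1)"
      have kL: "(\<lambda>x. t * h x) \<in> L1 T" using h by (auto simp: L1_def)
      have "norm1 T (\<lambda>x. t * h x) = \<bar>t\<bar> * N" by (simp add: norm1_scale N_def)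
      also have "\<dots> \<le> \<bar>t\<bar> * (N+1)" using t by simp
      also have "\<dots> < \<delta>" using t N0 by (simp add: field_simps)
      finally have "norm1 T (\<lambda>x. t * h x) < \<delta>" .
      with dd kL have est: "\<bar>F (\<lambda>x. u x + s * h x + t * h x) - F (\<lambda>x. u x + s * h x)
          - (\<integral>x. G (\<lambda>x. u x + s * h x) x * (t * h x) \<partial>Om T)\<bar> \<le> \<epsilon> * (\<bar>t\<bar> * N)"
        by (auto simp: norm1_scale N_def)
      have e1: "(\<lambda>x. u x + s * h x + t * h x) = (\<lambda>x. u x + (s + t) * h x)"
        by (auto simp: algebra_simps)
      have e2: "(\<integral>x. G (\<lambda>x. u x + s * h x) x * (t * h x) \<partial>Om T) = t * g' s"
        unfolding g'_def by (simp add: mult.left_commute)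
      have est2: "\<bar>g (s+t) - g s - t * g' s\<bar> \<le> \<epsilon> * (\<bar>t\<bar> * N)"
        using est unfolding e1 e2 g_def .
      have "(g (s + t) - g s) / t - g' s = (g (s+t) - g s - t * g' s) / t"
        using t by (simp add: field_simps)
      then have "norm ((g (s + t) - g s) / t - g' s) = \<bar>g (s+t) - g s - t * g' s\<bar> / \<bar>t\<bar>"
        by (simp add: abs_divide)
      also have "\<dots> \<le> \<epsilon> * (\<bar>t\<bar> * N) / \<bar>t\<bar>" using est2 by (intro divide_right_mono) auto
      also have "\<dots> = \<epsilon> * N" using t by simp
      also have "\<dots> < r" by (rule eN)
      finally show "norm ((g (s + t) - g s) / t - g' s) < r" .
    qed
  qed
  have lip: "g' s - g' 0 \<le> L * s * N * N" if s0: "s \<ge> 0" for s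
  proof -
    have i1: "integrable (Om T) (\<lambda>x. G (\<lambda>x. u x + s * h x) x * h x)" by (rule Gh_int[OF fg us h])
    have i0: "integrable (Om T) (\<lambda>x. G u x * h x)" by (rule Gh_int[OF fg u h])
    have g0: "g' 0 = (\<integral>x. G u x * h x \<partial>Om T)" by (simp add: g'_def)
    have AEb: "AE x in Om T. \<bar>G (\<lambda>x. u x + s * h x) x - G u x\<bar> \<le> L * norm1 T (\<lambda>y. u y + s * h y - u y)"
      using gl us[of s] u unfolding grad_lipschitz_def by blast
    have nn: "norm1 T (\<lambda>y. u y + s * h y - u y) = s * N"
      using norm1_scale[of T s h] s0 by (simp add: N_def)
    have "g' s - g' 0 = (\<integral>x. (G (\<lambda>x. u x + s * h x) x - G u x) * h x \<partial>Om T)"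
      unfolding g0 g'_def using i1 i0 by (simp add: left_diff_distrib)
    also have "\<dots> \<le> (\<integral>x. L * (s * N) * \<bar>h x\<bar> \<partial>Om T)"
    proof (rule integral_mono_AE)
      show "integrable (Om T) (\<lambda>x. (G (\<lambda>x. u x + s * h x) x - G u x) * h x)"
        using i1 i0 by (simp add: left_diff_distrib)
      show "integrable (Om T) (\<lambda>x. L * (s * N) * \<bar>h x\<bar>)" using h by (auto simp: L1_def)
      show "AE x in Om T. (G (\<lambda>x. u x + s * h x) x - G u x) * h x \<le> L * (s * N) * \<bar>h x\<bar>"
        using AEb unfolding nn
      proof eventually_elim
        case (elim x)
        have "(G (\<lambda>x. u x + s * h x) x - G u x) * h x \<le> \<bar>G (\<lambda>x. u x + s * h x) x - G u x\<bar> * \<bar>h x\<bar>"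
          by (metis abs_ge_self abs_mult)
        also have "\<dots> \<le> L * (s * N) * \<bar>h x\<bar>" using elim by (intro mult_right_mono) auto
        finally show ?case .
      qed
    qed
    also have "\<dots> = L * s * N * N" by (simp add: N_def norm1_def)
    finally show ?thesis .
  qed
  define \<phi> where "\<phi> s = g s - s * g' 0 - L/2 * s^2 * N^2" for s
  have "\<phi> 1 \<le> \<phi> 0"
  proof (rule DERIV_nonpos_imp_nonincreasing[where f=\<phi> and a=0 and b=1])
    fix s :: real assume s: "0 \<le> s" "s \<le> 1"
    have "(\<phi> has_real_derivative (g' s - g' 0 - L * s * N^2)) (at s)"
      unfolding \<phi>_def by (auto intro!: derivative_eq_intros der simp: power2_eq_square)
    moreover have "g' s - g' 0 - L * s * N^2 \<le> 0" using lip[of s] s by (simp add: power2_eq_square)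
    ultimately show "\<exists>y. (\<phi> has_real_derivative y) (at s) \<and> y \<le> 0" by blast
  qed simp
  moreover have "g 1 = F (\<lambda>x. u x + h x)" "g 0 = F u" by (simp_all add: g_def)
  moreover have "g' 0 = (\<integral>x. G u x * h x \<partial>Om T)" by (simp add: g'_def)
  ultimately show ?thesis by (simp add: \<phi>_def N_def)
qed

definition chi :: "real \<Rightarrow> real \<Rightarrow> real \<Rightarrow> real \<Rightarrow> real" where
  "chi t2 t3 \<delta> x = ss ((x - t2 + \<delta>)/\<delta>) + ss ((t3 + \<delta> - x)/\<delta>) - 1"
definition chi' :: "real \<Rightarrow> real \<Rightarrow> real \<Rightarrow> real \<Rightarrow> real" where
  "chi' t2 t3 \<delta> x = ss' ((x - t2 + \<delta>)/\<delta>) / \<delta> - ss' ((t3 + \<delta> - x)/\<delta>) / \<delta>"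
definition th :: "real \<Rightarrow> real \<Rightarrow> real \<Rightarrow> real" where
  "th t2 t3 x = 2 * ss ((x - t2)/(t3 - t2)) - 1"
definition th' :: "real \<Rightarrow> real \<Rightarrow> real \<Rightarrow> real" where
  "th' t2 t3 x = 2 * ss' ((x - t2)/(t3 - t2)) / (t3 - t2)"

lemma ss_chain: "(g has_real_derivative g') (at x) \<Longrightarrow> ((\<lambda>x. ss (g x)) has_real_derivative ss' (g x) * g') (at x)"
  by (rule DERIV_chain2[OF ss_deriv])

lemma ss_cont: "continuous_on UNIV ss"
  unfolding ss_def cl_def by (intro continuous_intros)

lemma ss_cont': "continuous_on S g \<Longrightarrow> continuous_on S (\<lambda>x. ss (g x))"
  using continuous_on_compose2[OF ss_cont, of S g] by auto
lemma ss'_cont': "continuous_on S g \<Longrightarrow> continuous_on S (\<lambda>x. ss' (g x))"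
  using continuous_on_compose2[OF ss'_cont, of S g] by auto

lemma chi_deriv: "\<delta> > 0 \<Longrightarrow> (chi t2 t3 \<delta> has_real_derivative chi' t2 t3 \<delta> x) (at x)"
  unfolding chi_def chi'_def
  by (auto intro!: derivative_eq_intros ss_chain simp: field_simps)

lemma th_deriv: assumes "t2 < t3" shows "(th t2 t3 has_real_derivative th' t2 t3 x) (at x)"
proof -
  have "((\<lambda>x. (x - t2)/(t3-t2)) has_real_derivative 1/(t3-t2)) (at x)"
    using assms by (auto intro!: derivative_eq_intros)
  from ss_chain[OF this] have "((\<lambda>x. 2 * ss ((x - t2)/(t3-t2)) - 1) has_real_derivative 2 * (ss' ((x - t2)/(t3-t2)) * (1/(t3-t2))) - 0) (at x)"
    by (intro derivative_eq_intros) auto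
  then show ?thesis unfolding th_def th'_def by simp
qed

lemma chi_cont: assumes "\<delta> > 0" "t2 < t3" shows "continuous_on UNIV (chi t2 t3 \<delta>)" "continuous_on UNIV (chi' t2 t3 \<delta>)"
  "continuous_on UNIV (th t2 t3)" "continuous_on UNIV (th' t2 t3)"
  unfolding chi_def chi'_def th_def th'_def
  using assms by (auto intro!: continuous_intros ss_cont' ss'_cont')

lemma regions:
  assumes d: "\<delta> > 0" and t: "t2 < t3"
  shows "x \<le> t2 - \<delta> \<Longrightarrow> chi t2 t3 \<delta> x = 0 \<and> chi' t2 t3 \<delta> x = 0"
    and "x \<ge> t3 + \<delta> \<Longrightarrow> chi t2 t3 \<delta> x = 0 \<and> chi' t2 t3 \<delta> x = 0"
    and "x \<le> t2 \<Longrightarrow> chi' t2 t3 \<delta> x \<ge> 0 \<and> th t2 t3 x = -1 \<and> th' t2 t3 x = 0"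
    and "x \<ge> t3 \<Longrightarrow> chi' t2 t3 \<delta> x \<le> 0 \<and> th t2 t3 x = 1 \<and> th' t2 t3 x = 0"
    and "t2 \<le> x \<Longrightarrow> x \<le> t3 \<Longrightarrow> chi t2 t3 \<delta> x = 1 \<and> chi' t2 t3 \<delta> x = 0"
    and "0 \<le> chi t2 t3 \<delta> x \<and> chi t2 t3 \<delta> x \<le> 1"
    and "\<bar>th t2 t3 x\<bar> \<le> 1"
proof -
  have le0: "p \<le> q \<Longrightarrow> (p - q)/\<delta> \<le> 0" for p q using d by (simp add: divide_nonpos_pos)
  have ge1: "p + \<delta> \<le> q \<Longrightarrow> 1 \<le> (q - p)/\<delta>" for p q using d by (simp add: field_simps)
  have a1: "x \<le> t2 - \<delta> \<Longrightarrow> (x - t2 + \<delta>)/\<delta> \<le> 0" using le0[of x "t2 - \<delta>"] by (simp add: algebra_simps)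
  have a2: "x \<le> t3 \<Longrightarrow> 1 \<le> (t3 + \<delta> - x)/\<delta>" using ge1[of x "t3+\<delta>"] by (simp add: algebra_simps)
  have a3: "x \<ge> t3 + \<delta> \<Longrightarrow> (t3 + \<delta> - x)/\<delta> \<le> 0" using le0[of "t3+\<delta>" x] by (simp add: algebra_simps)
  have a4: "x \<ge> t2 \<Longrightarrow> 1 \<le> (x - t2 + \<delta>)/\<delta>" using ge1[of "t2 - \<delta>" x] by (simp add: algebra_simps)
  have b1: "x \<le> t2 \<Longrightarrow> (x - t2)/(t3 - t2) \<le> 0" using t by (simp add: divide_nonpos_pos)
  have b2: "x \<ge> t3 \<Longrightarrow> 1 \<le> (x - t2)/(t3 - t2)" using t by (simp add: field_simps)
  show "x \<le> t2 - \<delta> \<Longrightarrow> chi t2 t3 \<delta> x = 0 \<and> chi' t2 t3 \<delta> x = 0"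
    using a1 a2 t d by (simp add: chi_def chi'_def ss_props)
  show "x \<ge> t3 + \<delta> \<Longrightarrow> chi t2 t3 \<delta> x = 0 \<and> chi' t2 t3 \<delta> x = 0"
    using a3 a4 t d by (simp add: chi_def chi'_def ss_props)
  show "x \<le> t2 \<Longrightarrow> chi' t2 t3 \<delta> x \<ge> 0 \<and> th t2 t3 x = -1 \<and> th' t2 t3 x = 0"
    using a2 b1 t d ss_props(3)[of "(x - t2 + \<delta>)/\<delta>"] by (simp add: chi'_def th_def th'_def ss_props)
  show "x \<ge> t3 \<Longrightarrow> chi' t2 t3 \<delta> x \<le> 0 \<and> th t2 t3 x = 1 \<and> th' t2 t3 x = 0"
    using a4 b2 t d ss_props(3)[of "(t3 + \<delta> - x)/\<delta>"] by (simp add: chi'_def th_def th'_def ss_props)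
  show "t2 \<le> x \<Longrightarrow> x \<le> t3 \<Longrightarrow> chi t2 t3 \<delta> x = 1 \<and> chi' t2 t3 \<delta> x = 0"
    using a2 a4 by (simp add: chi_def chi'_def ss_props)
  show "0 \<le> chi t2 t3 \<delta> x \<and> chi t2 t3 \<delta> x \<le> 1"
  proof (cases "x \<le> t3")
    case True then show ?thesis using a2 ss_props(1,2)[of "(x - t2 + \<delta>)/\<delta>"] by (simp add: chi_def ss_props)
  next
    case False then show ?thesis using a4 t ss_props(1,2)[of "(t3 + \<delta> - x)/\<delta>"] by (simp add: chi_def ss_props)
  qed
  show "\<bar>th t2 t3 x\<bar> \<le> 1" using ss_props(1,2)[of "(x - t2)/(t3 - t2)"] by (simp add: th_def)
qed

lemma AE_ne: "AE x in Om T. x \<noteq> c"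
proof -
  have "AE x in lebesgue. x \<noteq> c" using AE_completion[OF AE_lborel_singleton[of c]] by simp
  then show ?thesis by (subst AE_restrict_space_iff) (auto elim: eventually_mono)
qed

lemma AE_space: "AE x in Om T. 0 < x \<and> x < T"
  by (rule AE_I2) (auto simp: space_restrict_space)

lemma meas_Ioo: "0 \<le> a \<Longrightarrow> a \<le> b \<Longrightarrow> b \<le> T \<Longrightarrow> measure (Om T) {a<..<b} = b - a"
  by (subst measure_restrict_space) (auto simp: measure_completion)

lemma int_ind: "0 \<le> a \<Longrightarrow> a \<le> b \<Longrightarrow> b \<le> T \<Longrightarrow> (\<integral>x. indicator {a<..<b} x \<partial>Om T) = b - a"
proof -
  assume *: "0 \<le> a" "a \<le> b" "b \<le> T"
  have "(\<integral>x. indicator {a<..<b} x \<partial>Om T) = measure (Om T) ({a<..<b} \<inter> space (Om T))"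
    by (rule Bochner_Integration.integral_indicator)
  also have "{a<..<b} \<inter> space (Om T) = {a<..<b}" using * by (auto simp: space_restrict_space)
  finally show ?thesis using meas_Ioo[OF *] by simp
qed

lemma cont_int:
  fixes f :: "real \<Rightarrow> real"
  assumes "continuous_on UNIV f" shows "integrable (Om T) f"
proof -
  obtain B where B: "\<forall>x\<in>{0..T}. \<bar>f x\<bar> \<le> B" using cont_bound[OF assms] by blast
  show ?thesis
  proof (rule bint[where B=B])
    show "f \<in> borel_measurable (Om T)"
      by (rule continuous_imp_measurable_on_sets_lebesgue) (use assms continuous_on_subset in auto)
    show "AE x in Om T. \<bar>f x\<bar> \<le> B" using AE_space[of T] by eventually_elim (use B in auto)
  qed simp
qed

lemma u_cont_int:
  fixes f :: "real \<Rightarrow> real"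
  assumes u: "u \<in> L1 T" and c: "continuous_on UNIV f" shows "integrable (Om T) (\<lambda>x. u x * f x)"
proof -
  obtain B where B: "\<forall>x\<in>{0..T}. \<bar>f x\<bar> \<le> B" using cont_bound[OF c] by blast
  have 1: "integrable (Om T) (\<lambda>x. B * u x)" using u by (auto simp: L1_def)
  have 2: "(\<lambda>x. u x * f x) \<in> borel_measurable (Om T)"
  proof (rule borel_measurable_times)
    show "u \<in> borel_measurable (Om T)" using u by (auto simp: L1_def)
    show "f \<in> borel_measurable (Om T)"
      by (rule continuous_imp_measurable_on_sets_lebesgue) (use c continuous_on_subset in auto)
  qed
  have 3: "AE x in Om T. norm (u x * f x) \<le> norm (B * u x)"
    using AE_space[of T]
  proof eventually_elim
    case (elim x)
    then have "\<bar>f x\<bar> \<le> B" using B by auto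
    then have "\<bar>u x\<bar> * \<bar>f x\<bar> \<le> \<bar>u x\<bar> * B" by (intro mult_left_mono) auto
    moreover have "B \<ge> 0" using \<open>\<bar>f x\<bar> \<le> B\<close> by linarith
    ultimately show ?case by (simp add: abs_mult mult.commute)
  qed
  show ?thesis using Bochner_Integration.integrable_bound[OF 1 2 3] .
qed

definition psi :: "real \<Rightarrow> real \<Rightarrow> real \<Rightarrow> (real \<Rightarrow> real) \<Rightarrow> real \<Rightarrow> real" where
  "psi t2 t3 \<delta> \<phi> x = (1 - chi t2 t3 \<delta> x) * \<phi> x + chi t2 t3 \<delta> x * th t2 t3 x"
definition psi' :: "real \<Rightarrow> real \<Rightarrow> real \<Rightarrow> (real \<Rightarrow> real) \<Rightarrow> (real \<Rightarrow> real) \<Rightarrow> real \<Rightarrow> real" where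
  "psi' t2 t3 \<delta> \<phi> D x = (1 - chi t2 t3 \<delta> x) * D x - chi' t2 t3 \<delta> x * \<phi> x
     + chi' t2 t3 \<delta> x * th t2 t3 x + chi t2 t3 \<delta> x * th' t2 t3 x"

lemma psi_deriv:
  assumes "\<delta> > 0" "t2 < t3" "\<And>x. (\<phi> has_real_derivative D x) (at x)"
  shows "(psi t2 t3 \<delta> \<phi> has_real_derivative psi' t2 t3 \<delta> \<phi> D x) (at x)"
proof -
  note c = chi_deriv[OF assms(1), of t2 t3 x] and t = th_deriv[OF assms(2), of x] and p = assms(3)[of x]
  have "((\<lambda>x. (1 - chi t2 t3 \<delta> x) * \<phi> x + chi t2 t3 \<delta> x * th t2 t3 x) has_real_derivative
     ((0 - chi' t2 t3 \<delta> x) * \<phi> x + D x * (1 - chi t2 t3 \<delta> x)) + (chi' t2 t3 \<delta> x * th t2 t3 x + th' t2 t3 x * chi t2 t3 \<delta> x)) (at x)"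
    by (intro DERIV_add DERIV_mult DERIV_diff DERIV_const c t p)
  then show ?thesis unfolding psi_def psi'_def by (simp add: algebra_simps)
qed

lemma phi_cont: "(\<And>x. (\<phi> has_real_derivative D x) (at x)) \<Longrightarrow> continuous_on UNIV \<phi>"
  by (meson DERIV_isCont continuous_at_imp_continuous_on)

lemma psi'_cont:
  assumes "\<delta> > 0" "t2 < t3" "\<And>x. (\<phi> has_real_derivative D x) (at x)" "continuous_on UNIV D"
  shows "continuous_on UNIV (psi' t2 t3 \<delta> \<phi> D)"
  using chi_cont[OF assms(1,2)] phi_cont[OF assms(3)] assms(4) unfolding psi'_def
  by (intro continuous_intros) auto

lemma psi_test:
  assumes d: "\<delta> > 0" and t: "t2 < t3" and Dd: "\<And>x. (\<phi> has_real_derivative D x) (at x)"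
    and Dc: "continuous_on UNIV D" and tf: "test_fun T \<phi>" and l: "0 < t2 - \<delta>" and r: "t3 + \<delta> < T"
  shows "test_fun T (psi t2 t3 \<delta> \<phi>)"
  unfolding test_fun_def
proof (intro conjI)
  show "psi t2 t3 \<delta> \<phi> C1_differentiable_on UNIV"
    unfolding C1_differentiable_on_def
    using psi_deriv[OF d t Dd] psi'_cont[OF d t Dd Dc]
    by (auto simp: has_real_derivative_iff_has_vector_derivative)
  obtain a b where ab: "0 < a" "a \<le> b" "b < T" "\<forall>x. x \<notin> {a..b} \<longrightarrow> \<phi> x = 0"
    using tf unfolding test_fun_def by blast
  have z: "\<forall>x. x \<notin> {min a (t2 - \<delta>)..max b (t3 + \<delta>)} \<longrightarrow> psi t2 t3 \<delta> \<phi> x = 0"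
  proof (intro allI impI)
    fix x assume x: "x \<notin> {min a (t2 - \<delta>)..max b (t3 + \<delta>)}"
    then have "x \<le> t2 - \<delta> \<or> x \<ge> t3 + \<delta>" "x \<notin> {a..b}" by auto
    then have "chi t2 t3 \<delta> x = 0" "\<phi> x = 0" using regions(1,2)[OF d t, of x] ab(4) by auto
    then show "psi t2 t3 \<delta> \<phi> x = 0" by (simp add: psi_def)
  qed
  have "0 < min a (t2 - \<delta>)" "min a (t2 - \<delta>) \<le> max b (t3 + \<delta>)" "max b (t3 + \<delta>) < T"
    using ab l r t d by auto
  with z show "\<exists>a b. 0 < a \<and> a \<le> b \<and> b < T \<and> (\<forall>x. x \<notin> {a..b} \<longrightarrow> psi t2 t3 \<delta> \<phi> x = 0)"
    by blast
  show "\<forall>x. \<bar>psi t2 t3 \<delta> \<phi> x\<bar> \<le> 1"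
  proof
    fix x
    have c: "0 \<le> chi t2 t3 \<delta> x" "chi t2 t3 \<delta> x \<le> 1" using regions(6)[OF d t] by auto
    have p: "\<bar>\<phi> x\<bar> \<le> 1" using tf by (auto simp: test_fun_def)
    have th: "\<bar>th t2 t3 x\<bar> \<le> 1" using regions(7)[OF d t] by auto
    have "\<bar>psi t2 t3 \<delta> \<phi> x\<bar> \<le> \<bar>1 - chi t2 t3 \<delta> x\<bar> * \<bar>\<phi> x\<bar> + \<bar>chi t2 t3 \<delta> x\<bar> * \<bar>th t2 t3 x\<bar>"
      unfolding psi_def by (metis abs_mult abs_triangle_ineq)
    also have "\<dots> \<le> (1 - chi t2 t3 \<delta> x) * 1 + chi t2 t3 \<delta> x * 1"
      using c p th by (intro add_mono mult_mono) auto
    finally show "\<bar>psi t2 t3 \<delta> \<phi> x\<bar> \<le> 1" by simp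
  qed
qed

lemma TV_key:
  fixes u \<phi> D :: "real \<Rightarrow> real"
  assumes d: "\<delta> > 0" and t: "t2 < t3" and l: "0 < t2 - \<delta>" and r: "t3 + \<delta> < T"
    and l1: "t1 \<le> t2 - \<delta>" and r1: "t3 + \<delta> \<le> t4"
    and Dd: "\<And>x. (\<phi> has_real_derivative D x) (at x)" and Dc: "continuous_on UNIV D"
    and tf: "test_fun T \<phi>" and B: "\<forall>x\<in>{0..T}. \<bar>D x\<bar> \<le> B"
    and u: "u \<in> L1 T" and K: "AE x in Om T. \<bar>u x - M\<bar> \<le> K"
    and mid: "AE x in Om T. x \<in> {t2<..<t3} \<longrightarrow> u x = M + c"
    and side: "AE x in Om T. x \<in> {t1<..<t2} \<union> {t3<..<t4} \<longrightarrow> u x \<le> M"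
  shows "(\<integral>x. (u x - c * indicator {t2<..<t3} x) * D x \<partial>Om T) + 2*c - 2*K*B*\<delta>
           \<le> (\<integral>x. u x * psi' t2 t3 \<delta> \<phi> D x \<partial>Om T)"
proof -
  define p' where "p' = psi' t2 t3 \<delta> \<phi> D"
  define Im where "Im = (indicator {t2<..<t3} :: real \<Rightarrow> real)"
  define IL where "IL = (indicator {t2-\<delta><..<t2} :: real \<Rightarrow> real)"
  define IR where "IR = (indicator {t3<..<t3+\<delta>} :: real \<Rightarrow> real)"
  have pd: "\<And>x. (psi t2 t3 \<delta> \<phi> has_real_derivative p' x) (at x)"
    unfolding p'_def by (rule psi_deriv[OF d t Dd])
  have pc: "continuous_on UNIV p'" unfolding p'_def by (rule psi'_cont[OF d t Dd Dc])
  obtain a b where ab: "0 < a" "a \<le> b" "b < T" "\<forall>x. x \<notin> {a..b} \<longrightarrow> \<phi> x = 0"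
    using tf unfolding test_fun_def by blast
  have T0: "T > 0" using l r t d by linarith
  have iup: "integrable (Om T) (\<lambda>x. u x * p' x)" by (rule u_cont_int[OF u pc])
  have iuD: "integrable (Om T) (\<lambda>x. u x * D x)" by (rule u_cont_int[OF u Dc])
  have ip: "integrable (Om T) p'" by (rule cont_int[OF pc])
  have iD: "integrable (Om T) D" by (rule cont_int[OF Dc])
  have i1: "integrable (Om T) (\<lambda>_. 1::real)" by (rule cont_int) (intro continuous_intros)
  have ind_int: "integrable (Om T) (\<lambda>x. indicator A x * f x)" if "A \<in> sets lebesgue" "A \<subseteq> {0<..<T}" "integrable (Om T) f" for A and f :: "real \<Rightarrow> real"
    using integrable_mult_indicator[of A "Om T" f] that by (auto simp: sets_restrict_space_iff)
  have iImp: "integrable (Om T) (\<lambda>x. Im x * p' x)" unfolding Im_def by (rule ind_int[OF _ _ ip]) (use l r t d in auto)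
  have iImD: "integrable (Om T) (\<lambda>x. Im x * D x)" unfolding Im_def by (rule ind_int[OF _ _ iD]) (use l r t d in auto)
  have iIL: "integrable (Om T) IL" using ind_int[OF _ _ i1, of "{t2-\<delta><..<t2}"] l r t d unfolding IL_def by (simp add: subset_eq)
  have iIR: "integrable (Om T) IR" using ind_int[OF _ _ i1, of "{t3<..<t3+\<delta>}"] l r t d unfolding IR_def by (simp add: subset_eq)
  have ivD: "integrable (Om T) (\<lambda>x. (u x - c * Im x) * D x)"
  proof -
    have "integrable (Om T) (\<lambda>x. u x * D x - c * (Im x * D x))" using iuD iImD by auto
    moreover have "(\<lambda>x. u x * D x - c * (Im x * D x)) = (\<lambda>x. (u x - c * Im x) * D x)"
      by (auto simp: algebra_simps)
    ultimately show ?thesis by simp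
  qed
  have psi0: "psi t2 t3 \<delta> \<phi> 0 = 0" and psiT: "psi t2 t3 \<delta> \<phi> T = 0"
    using regions(1,2)[OF d t, of 0] regions(1,2)[OF d t, of T] ab l r by (auto simp: psi_def)
  have psi2: "psi t2 t3 \<delta> \<phi> t2 = -1" and psi3: "psi t2 t3 \<delta> \<phi> t3 = 1"
    using regions(3,4,5)[OF d t, of t2] regions(3,4,5)[OF d t, of t3] t by (auto simp: psi_def)
  have Ip: "(\<integral>x. p' x \<partial>Om T) = 0" using ftc(2)[OF T0 pd pc] psi0 psiT by simp
  have ID: "(\<integral>x. D x \<partial>Om T) = 0"
  proof -
    have "\<phi> 0 = 0" "\<phi> T = 0" using ab by auto
    then show ?thesis using ftc(2)[OF T0 Dd Dc] by simp
  qed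
  have IImp: "(\<integral>x. Im x * p' x \<partial>Om T) = 2"
  proof -
    have "(\<lambda>x. Im x * p' x) = (\<lambda>x. if x \<in> {t2<..<t3} then p' x else 0)" by (auto simp: Im_def)
    then have "(\<integral>x. Im x * p' x \<partial>Om T) = integral\<^sup>L (lebesgue_on {t2<..<t3}) p'"
    proof -
      have sub: "{t2<..<t3} \<subseteq> {0<..<T}" using l r d t by (simp add: subset_eq)
      show ?thesis using integral_restrict[of "{t2<..<t3}" "{0<..<T}" p'] sub \<open>(\<lambda>x. Im x * p' x) = _\<close> by simp
    qed
    also have "\<dots> = 2" using ftc(2)[OF t pd pc] psi2 psi3 by simp
    finally show ?thesis .
  qed
  have IIL: "(\<integral>x. IL x \<partial>Om T) = \<delta>" unfolding IL_def using int_ind[of "t2-\<delta>" t2 T] l r t d by simp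
  have IIR: "(\<integral>x. IR x \<partial>Om T) = \<delta>" unfolding IR_def using int_ind[of t3 "t3+\<delta>" T] l r t d by simp
  define R where "R x = c * (Im x * p' x) - K * B * IL x - K * B * IR x + M * (p' x - D x)" for x
  have iR: "integrable (Om T) R" unfolding R_def using iImp iIL iIR ip iD by auto
  have IR_val: "(\<integral>x. R x \<partial>Om T) = 2*c - 2*K*B*\<delta>"
    unfolding R_def using iImp iIL iIR ip iD IImp IIL IIR Ip ID by (simp add: algebra_simps)
  have iQ: "integrable (Om T) (\<lambda>x. u x * p' x - (u x - c * Im x) * D x)" using iup ivD by auto
  have AEQ: "AE x in Om T. R x \<le> u x * p' x - (u x - c * Im x) * D x"
    using K mid side AE_ne[of t2 T] AE_ne[of t3 T] AE_space[of T]
  proof eventually_elim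
    case (elim x)
    have Kx: "\<bar>u x - M\<bar> \<le> K" using elim by simp
    have Bx: "\<bar>D x\<bar> \<le> B" using B elim by auto
    have c01: "0 \<le> chi t2 t3 \<delta> x" "chi t2 t3 \<delta> x \<le> 1" using regions(6)[OF d t] by auto
    have ph: "\<bar>\<phi> x\<bar> \<le> 1" using tf by (auto simp: test_fun_def)
    have KB: "\<bar>(u x - M) * chi t2 t3 \<delta> x * D x\<bar> \<le> K * B"
    proof -
      have "\<bar>(u x - M) * chi t2 t3 \<delta> x * D x\<bar> = \<bar>u x - M\<bar> * chi t2 t3 \<delta> x * \<bar>D x\<bar>"
        using c01 by (simp add: abs_mult)
      also have "\<dots> \<le> K * 1 * B" using Kx Bx c01 by (intro mult_mono) auto
      finally show ?thesis by simp
    qed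
    consider "x \<le> t2 - \<delta> \<or> x \<ge> t3 + \<delta>" | "t2 - \<delta> < x \<and> x < t2" | "t2 < x \<and> x < t3" | "t3 < x \<and> x < t3 + \<delta>"
      using elim by linarith
    then show ?case
    proof cases
      case 1
      then have "chi t2 t3 \<delta> x = 0 \<and> chi' t2 t3 \<delta> x = 0" using regions(1,2)[OF d t, of x] by auto
      moreover have "Im x = 0" "IL x = 0" "IR x = 0" using 1 d t by (auto simp: Im_def IL_def IR_def indicator_def)
      ultimately show ?thesis by (simp add: R_def p'_def psi'_def)
    next
      case 2
      have r3: "chi' t2 t3 \<delta> x \<ge> 0 \<and> th t2 t3 x = -1 \<and> th' t2 t3 x = 0" using regions(3)[OF d t, of x] 2 by auto
      have ind: "Im x = 0" "IL x = 1" "IR x = 0" using 2 t by (auto simp: Im_def IL_def IR_def)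
      have ux: "u x \<le> M" using elim 2 l1 by auto
      have h1: "0 \<le> (M - u x) * chi' t2 t3 \<delta> x * (\<phi> x + 1)" using ux r3 ph by auto
      have eq: "u x * p' x - (u x - c * Im x) * D x - M * (p' x - D x)
          = (M - u x) * chi' t2 t3 \<delta> x * (\<phi> x + 1) - (u x - M) * chi t2 t3 \<delta> x * D x"
        using r3 ind by (simp add: p'_def psi'_def algebra_simps)
      have "R x = - K * B + M * (p' x - D x)" using ind by (simp add: R_def)
      then show ?thesis using eq h1 abs_le_D1[OF KB] by linarith
    next
      case 3
      have r5: "chi t2 t3 \<delta> x = 1 \<and> chi' t2 t3 \<delta> x = 0" using regions(5)[OF d t, of x] 3 by auto
      have ind: "Im x = 1" "IL x = 0" "IR x = 0" using 3 d by (auto simp: Im_def IL_def IR_def)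
      have ux: "u x = M + c" using elim 3 by auto
      show ?thesis using r5 ind ux by (simp add: R_def p'_def psi'_def algebra_simps)
    next
      case 4
      have r4: "chi' t2 t3 \<delta> x \<le> 0 \<and> th t2 t3 x = 1 \<and> th' t2 t3 x = 0" using regions(4)[OF d t, of x] 4 by auto
      have ind: "Im x = 0" "IL x = 0" "IR x = 1" using 4 t by (auto simp: Im_def IL_def IR_def)
      have ux: "u x \<le> M" using elim 4 r1 by auto
      have "0 \<le> M - u x" "0 \<le> - chi' t2 t3 \<delta> x" "0 \<le> 1 - \<phi> x" using ux r4 ph by auto
      then have h1: "0 \<le> (M - u x) * (- chi' t2 t3 \<delta> x) * (1 - \<phi> x)" by (intro mult_nonneg_nonneg)
      have eq: "u x * p' x - (u x - c * Im x) * D x - M * (p' x - D x)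
          = (M - u x) * (- chi' t2 t3 \<delta> x) * (1 - \<phi> x) - (u x - M) * chi t2 t3 \<delta> x * D x"
        using r4 ind by (simp add: p'_def psi'_def algebra_simps)
      have "R x = - K * B + M * (p' x - D x)" using ind by (simp add: R_def)
      then show ?thesis using eq h1 abs_le_D1[OF KB] by linarith
    qed
  qed
  have "(\<integral>x. R x \<partial>Om T) \<le> (\<integral>x. u x * p' x - (u x - c * Im x) * D x \<partial>Om T)"
    by (rule integral_mono_AE[OF iR iQ AEQ])
  also have "\<dots> = (\<integral>x. u x * p' x \<partial>Om T) - (\<integral>x. (u x - c * Im x) * D x \<partial>Om T)"
    using iup ivD by simp
  finally show ?thesis using IR_val unfolding p'_def Im_def by simp
qed

lemma eps_arg:
  fixes X r Q dz :: real
  assumes d0: "dz > 0" and Q: "Q \<ge> 0" and h: "\<And>\<delta>. 0 < \<delta> \<Longrightarrow> \<delta> \<le> dz \<Longrightarrow> X - Q * \<delta> \<le> r"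
  shows "X \<le> r"
proof (rule ccontr)
  assume "\<not> X \<le> r"
  then have e: "X - r > 0" by simp
  define \<delta> where "\<delta> = min dz ((X - r)/(Q+1))"
  have dp: "\<delta> > 0" using d0 e Q by (simp add: \<delta>_def)
  have "Q * \<delta> \<le> Q * ((X - r)/(Q+1))" using Q by (intro mult_left_mono) (auto simp: \<delta>_def)
  also have "\<dots> < X - r" using e Q by (simp add: field_simps)
  finally have "X - Q * \<delta> > r" by simp
  with h[OF dp] show False by (simp add: \<delta>_def)
qed

lemma test_D:
  assumes "test_fun T \<phi>"
  obtains D where "\<And>x. (\<phi> has_real_derivative D x) (at x)" "continuous_on UNIV D"
  using assms unfolding test_fun_def C1_differentiable_on_def
  by (auto simp: has_real_derivative_iff_has_vector_derivative)

lemma TV_part: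
  fixes u :: "real \<Rightarrow> real"
  assumes t: "0 < t1" "t1 < t2" "t2 < t3" "t3 < t4" "t4 < T"
    and u: "u \<in> L1 T" and K: "AE x in Om T. \<bar>u x - M\<bar> \<le> K"
    and mid: "AE x in Om T. x \<in> {t2<..<t3} \<longrightarrow> u x = M + c"
    and side: "AE x in Om T. x \<in> {t1<..<t2} \<union> {t3<..<t4} \<longrightarrow> u x \<le> M"
    and TVu: "TV T u = ereal r" and a: "a = - c"
  shows "TV T (\<lambda>t. u t + a * indicator {t2<..<t3} t) \<le> ereal (r - 2*c)"
  unfolding TV_def
proof (rule SUP_least)
  fix \<phi> assume "\<phi> \<in> {\<phi>. test_fun T \<phi>}"
  then have tf: "test_fun T \<phi>" by simp
  obtain D where Dd: "\<And>x. (\<phi> has_real_derivative D x) (at x)" and Dc: "continuous_on UNIV D"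
    using test_D[OF tf] by blast
  have dD: "deriv \<phi> x = D x" for x using Dd by (rule DERIV_imp_deriv)
  obtain B where B: "\<forall>x\<in>{0..T}. \<bar>D x\<bar> \<le> B" using cont_bound[OF Dc] by blast
  have B0: "B \<ge> 0" using B t by force
  define K' where "K' = max K 0"
  have K': "AE x in Om T. \<bar>u x - M\<bar> \<le> K'" using K by eventually_elim (auto simp: K'_def)
  define X where "X = (\<integral>x. (u x - c * indicator {t2<..<t3} x) * D x \<partial>Om T)"
  have "X + 2*c \<le> r"
  proof (rule eps_arg[where dz = "min (t2 - t1) (t4 - t3)" and Q = "2*K'*B"])
    show "min (t2 - t1) (t4 - t3) > 0" using t by simp
    show "2*K'*B \<ge> 0" using B0 by (simp add: K'_def)
    fix \<delta> :: real assume d: "0 < \<delta>" "\<delta> \<le> min (t2 - t1) (t4 - t3)"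
    have d': "0 < t2 - \<delta>" "t3 + \<delta> < T" "t1 \<le> t2 - \<delta>" "t3 + \<delta> \<le> t4" using d t by auto
    have key: "X + 2*c - 2*K'*B*\<delta> \<le> (\<integral>x. u x * psi' t2 t3 \<delta> \<phi> D x \<partial>Om T)"
      unfolding X_def by (rule TV_key[OF d(1) t(3) d'(1,2,3,4) Dd Dc tf B u K' mid side])
    have "(\<integral>x. u x * psi' t2 t3 \<delta> \<phi> D x \<partial>Om T) = (\<integral>x. u x * deriv (psi t2 t3 \<delta> \<phi>) x \<partial>Om T)"
      using DERIV_imp_deriv[OF psi_deriv[OF d(1) t(3) Dd]] by simp
    also have "ereal \<dots> \<le> TV T u" unfolding TV_def
      by (rule SUP_upper) (use psi_test[OF d(1) t(3) Dd Dc tf d'(1,2)] in simp)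
    finally have "(\<integral>x. u x * psi' t2 t3 \<delta> \<phi> D x \<partial>Om T) \<le> r" using TVu by simp
    with key show "X + 2*c - 2*K'*B*\<delta> \<le> r" by simp
  qed
  moreover have "(\<integral>t. (u t + a * indicator {t2<..<t3} t) * deriv \<phi> t \<partial>Om T) = X"
    unfolding X_def dD a by simp
  ultimately show "ereal (\<integral>t. (u t + a * indicator {t2<..<t3} t) * deriv \<phi> t \<partial>Om T) \<le> ereal (r - 2*c)"
    by simp
qed

theorem theorem3p12:
  fixes T \<beta> L t1 t2 t3 t4 :: real and d j :: nat and \<nu> :: "nat \<Rightarrow> int"
    and F :: "(real \<Rightarrow> real) \<Rightarrow> real" and G :: "(real \<Rightarrow> real) \<Rightarrow> (real \<Rightarrow> real)"
    and u :: "real \<Rightarrow> real"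
  assumes "T > 0" and "\<beta> > 0"
    and "strict_mono_on {1..d} \<nu>"
    and "frechet_grad T F G"
    and "L \<ge> 0" and "grad_lipschitz T G L"
    and "u \<in> Uad T d \<nu>" and "u \<in> BV T"
    and "j \<in> {2..d}"
    and "0 < t1" and "t1 < t2" and "t2 < t3" and "t3 < t4" and "t4 < T"
    and "AE t in Om T. t \<in> {t2<..<t3} \<longrightarrow> u t = real_of_int (\<nu> j)"
    and "AE t in Om T. t \<in> {t1<..<t2} \<union> {t3<..<t4} \<longrightarrow> u t < real_of_int (\<nu> j)"
    and "- 2 * \<beta> - (\<integral>s. G u s \<partial>lebesgue_on {t2<..<t3})
         + L / 2 * real_of_int (\<nu> j - \<nu> (j - 1)) * (t3 - t2)^2 < 0"
  shows "ereal (F (\<lambda>t. u t + real_of_int (\<nu> (j - 1) - \<nu> j) * indicator {t2<..<t3} t))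
           + ereal \<beta> * TV T (\<lambda>t. u t + real_of_int (\<nu> (j - 1) - \<nu> j) * indicator {t2<..<t3} t)
         < ereal (F u) + ereal \<beta> * TV T u"
proof -
  note T0 = assms(1) and b0 = assms(2) and sm = assms(3) and fg = assms(4) and L0 = assms(5)
    and gl = assms(6) and uad = assms(7) and ubv = assms(8) and j = assms(9)
    and t = assms(10-14) and hmid = assms(15) and hside = assms(16) and hyp = assms(17)
  define c where "c = real_of_int (\<nu> j - \<nu> (j - 1))"
  define M where "M = real_of_int (\<nu> (j - 1))"
  define a where "a = real_of_int (\<nu> (j - 1) - \<nu> j)"
  define I where "I = (\<integral>s. G u s \<partial>lebesgue_on {t2<..<t3})"
  have j1: "j - 1 \<in> {1..d}" "j \<in> {1..d}" "j - 1 < j" using j by auto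
  have c0: "c > 0" using strict_mono_onD[OF sm j1] by (simp add: c_def)
  have a: "a = - c" by (simp add: a_def c_def)
  have u: "u \<in> L1 T" using uad by (simp add: Uad_def)
  have vals: "AE t in Om T. u t \<in> (\<lambda>i. real_of_int (\<nu> i)) ` {1..d}" using uad by (simp add: Uad_def)
  define U where "U = (\<Sum>i\<in>{1..d}. \<bar>real_of_int (\<nu> i)\<bar>)"
  have K: "AE x in Om T. \<bar>u x - M\<bar> \<le> U + \<bar>M\<bar>"
    using vals
  proof eventually_elim
    case (elim x)
    then obtain i where i: "i \<in> {1..d}" "u x = real_of_int (\<nu> i)" by auto
    have "\<bar>real_of_int (\<nu> i)\<bar> \<le> U" unfolding U_def by (rule member_le_sum[OF i(1)]) auto
    then show ?case using i by linarith
  qed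
  have mid: "AE x in Om T. x \<in> {t2<..<t3} \<longrightarrow> u x = M + c"
    using hmid by eventually_elim (simp add: M_def c_def)
  have side: "AE x in Om T. x \<in> {t1<..<t2} \<union> {t3<..<t4} \<longrightarrow> u x \<le> M"
    using hside vals
  proof eventually_elim
    case (elim x)
    show ?case
    proof
      assume x: "x \<in> {t1<..<t2} \<union> {t3<..<t4}"
      obtain i where i: "i \<in> {1..d}" "u x = real_of_int (\<nu> i)" using elim(2) by auto
      have lt: "\<nu> i < \<nu> j" using elim(1) x i by auto
      have "i < j"
      proof (rule ccontr)
        assume "\<not> i < j"
        then have "j \<le> i" by simp
        then have "\<nu> j \<le> \<nu> i" using strict_mono_on_leD[OF sm j1(2) i(1)] by simp
        with lt show False by simp
      qed
      then have "i \<le> j - 1" by simp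
      then have "\<nu> i \<le> \<nu> (j - 1)" using strict_mono_on_leD[OF sm i(1) j1(1)] by simp
      then show "u x \<le> M" using i by (simp add: M_def)
    qed
  qed
  have TVne: "TV T u \<ge> 0"
  proof -
    have tf0: "test_fun T (\<lambda>_. 0)" unfolding test_fun_def
      using T0 by (auto intro!: exI[of _ "T/2"])
    have "ereal (\<integral>t. u t * deriv (\<lambda>_. 0) t \<partial>Om T) \<le> TV T u" unfolding TV_def
      by (rule SUP_upper) (use tf0 in simp)
    then show ?thesis by (simp add: zero_ereal_def)
  qed
  have "TV T u < \<infinity>" using ubv by (simp add: BV_def)
  then obtain r where TVu: "TV T u = ereal r" using TVne by (cases "TV T u") auto
  have TVv: "TV T (\<lambda>t. u t + a * indicator {t2<..<t3} t) \<le> ereal (r - 2*c)"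
    by (rule TV_part[OF t u K mid side TVu a])
  define h where "h = (\<lambda>t. a * indicator {t2<..<t3} t :: real)"
  have iind: "integrable (Om T) (indicator {t2<..<t3} :: real \<Rightarrow> real)"
  proof -
    have "integrable (Om T) (\<lambda>x. indicator {t2<..<t3} x *\<^sub>R (1::real))"
      by (rule integrable_mult_indicator) (use t in \<open>auto simp: sets_restrict_space_iff intro!: cont_int\<close>)
    then show ?thesis by simp
  qed
  have h: "h \<in> L1 T" using iind by (simp add: h_def L1_def)
  have Fv: "F (\<lambda>x. u x + h x) \<le> F u + (\<integral>x. G u x * h x \<partial>Om T) + L/2 * (norm1 T h)^2"
    by (rule F_part[OF fg gl L0 u h])
  have n1: "norm1 T h = c * (t3 - t2)"
  proof -
    have "norm1 T h = (\<integral>x. \<bar>a\<bar> * indicator {t2<..<t3} x \<partial>Om T)"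
      unfolding norm1_def h_def by (simp add: abs_mult)
    also have "\<dots> = \<bar>a\<bar> * (t3 - t2)" using int_ind[of t2 t3 T] t by simp
    finally show ?thesis using a c0 by simp
  qed
  have gi: "(\<integral>x. G u x * h x \<partial>Om T) = a * I"
  proof -
    have "(\<lambda>x. G u x * h x) = (\<lambda>x. a * (if x \<in> {t2<..<t3} then G u x else 0))"
      by (auto simp: h_def)
    then have "(\<integral>x. G u x * h x \<partial>Om T) = a * (\<integral>x. (if x \<in> {t2<..<t3} then G u x else 0) \<partial>Om T)"
      by simp
    also have "(\<integral>x. (if x \<in> {t2<..<t3} then G u x else 0) \<partial>Om T) = I"
    proof -
      have sub: "{t2<..<t3} \<subseteq> {0<..<T}" using t by (simp add: subset_eq)
      show ?thesis unfolding I_def using integral_restrict[of "{t2<..<t3}" "{0<..<T}" "G u"] sub by simp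
    qed
    finally show ?thesis .
  qed
  have Fv2: "F (\<lambda>t. u t + a * indicator {t2<..<t3} t) \<le> F u - c * I + L/2 * (c * (t3 - t2))^2"
    using Fv unfolding gi n1 a by (simp add: h_def a)
  have key: "c * (- 2 * \<beta> - I + L / 2 * c * (t3 - t2)^2) < 0"
    using hyp c0 unfolding I_def c_def by (intro mult_pos_neg) auto
  have real_ineq: "F (\<lambda>t. u t + a * indicator {t2<..<t3} t) + \<beta> * (r - 2*c) < F u + \<beta> * r"
    using Fv2 key by (simp add: algebra_simps power2_eq_square)
  have "ereal (F (\<lambda>t. u t + a * indicator {t2<..<t3} t)) + ereal \<beta> * TV T (\<lambda>t. u t + a * indicator {t2<..<t3} t)
      \<le> ereal (F (\<lambda>t. u t + a * indicator {t2<..<t3} t)) + ereal \<beta> * ereal (r - 2*c)"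
    using b0 by (intro add_left_mono ereal_mult_left_mono TVv) auto
  also have "\<dots> < ereal (F u) + ereal \<beta> * TV T u"
    using real_ineq TVu by simp
  finally show ?thesis unfolding a_def .
qed

end
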